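(* For $n\ge 1$, the subtree number indices of the spiro ortho-chain $O_n$, meta-chain $M_n$ and para-chain $P_n$ with $n$ hexagons are \[ \mathrm{STN}(O_n)=\frac{256(16^{n-1}-1)}{9}+\frac{25(n-1)}{3}+36,\qquad \mathrm{STN}(M_n)=\frac{325(13^{n-1}-1)}{9}+\frac{5(n-1)}{3}+36, \] \[ \mathrm{STN}(P_n)=\frac{4800(12^{n-1}-1)}{121}-\frac{15(n-1)}{11}+36. \]
   Context: For a graph $G$, $\mathrm{STN}(G)$ is the number of nonempty subtrees of $G$ (subgraphs that are trees, single vertices included). A spiro chain with $n$ hexagons consists of hexagons (6-cycles) $H_1,\dots,H_n$ such that $H_i$ and $H_{i+1}$ share exactly one vertex (a cut vertex) for $i=1,\dots,n-1$, non-consecutive hexagons are vertex-disjoint, and the graph is the union of these hexagons. For $2\le i\le n-1$, $H_i$ contains two distinct cut vertices. The spiro ortho-chain $O_n$ (resp. meta-chain $M_n$, para-chain $P_n$) is the spiro chain in which, for every $2\le i\le n-1$, these two cut vertices are at distance $1$ (resp. $2$, $3$) in $H_i$. *)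

theory Defs
  imports Complex_Main
begin

definition is_graph :: "'a set \<Rightarrow> 'a set set \<Rightarrow> bool" where
  "is_graph V E \<longleftrightarrow> finite V \<and> (\<forall>e\<in>E. \<exists>u v. u \<noteq> v \<and> e = {u, v} \<and> u \<in> V \<and> v \<in> V)"

definition connected_graph :: "'a set \<Rightarrow> 'a set set \<Rightarrow> bool" where
  "connected_graph V E \<longleftrightarrow> V \<noteq> {} \<and>
     (\<forall>u\<in>V. \<forall>v\<in>V. (\<lambda>x y. {x, y} \<in> E)\<^sup>*\<^sup>* u v)"

definition has_cycle :: "'a set set \<Rightarrow> bool" where
  "has_cycle E \<longleftrightarrow> (\<exists>vs. length vs \<ge> 3 \<and> distinct vs \<and>
     (\<forall>i. Suc i < length vs \<longrightarrow> {vs ! i, vs ! Suc i} \<in> E) \<and> {last vs, hd vs} \<in> E)"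

definition is_tree :: "'a set \<Rightarrow> 'a set set \<Rightarrow> bool" where
  "is_tree V E \<longleftrightarrow> is_graph V E \<and> connected_graph V E \<and> \<not> has_cycle E"

definition subtrees :: "'a set \<Rightarrow> 'a set set \<Rightarrow> ('a set \<times> 'a set set) set" where
  "subtrees V E = {(V', E'). V' \<subseteq> V \<and> E' \<subseteq> E \<and> is_tree V' E'}"

definition STN :: "'a set \<Rightarrow> 'a set set \<Rightarrow> nat" where
  "STN V E = card (subtrees V E)"

text \<open>Spiro chain with n hexagons where, in each hexagon, the next cut vertex lies at
  distance d (d = 1 ortho, d = 2 meta, d = 3 para) from the previous one along the hexagon. Hexagon i (i < n) is the 6-cycle
  entry_i, 5i+1, 5i+2, 5i+3, 5i+4, 5i+5 (back to entry_i), where entry_0 = 0 and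
  entry_(i+1) = 5i+d is the vertex of hexagon i at distance d from entry_i.\<close>

fun spiro_entry :: "nat \<Rightarrow> nat \<Rightarrow> nat" where
  "spiro_entry d 0 = 0"
| "spiro_entry d (Suc i) = 5 * i + d"

definition hexagon :: "nat \<Rightarrow> nat \<Rightarrow> nat list" where
  "hexagon d i = [spiro_entry d i, 5*i+1, 5*i+2, 5*i+3, 5*i+4, 5*i+5]"

definition cycle_edges :: "'a list \<Rightarrow> 'a set set" where
  "cycle_edges vs = {{vs ! k, vs ! ((k + 1) mod length vs)} | k. k < length vs}"

definition spiro_V :: "nat \<Rightarrow> nat set" where
  "spiro_V n = {0..5*n}"

definition spiro_E :: "nat \<Rightarrow> nat \<Rightarrow> nat set set" where
  "spiro_E d n = (\<Union>i<n. cycle_edges (hexagon d i))"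

end

theory Submission
  imports Defs
begin

abbreviation Rel :: "'a set set \<Rightarrow> 'a \<Rightarrow> 'a \<Rightarrow> bool" where
  "Rel E \<equiv> (\<lambda>x y. {x, y} \<in> E)"

lemma graph_edge: "is_graph V E \<Longrightarrow> e \<in> E \<Longrightarrow> \<exists>u v. u \<noteq> v \<and> e = {u,v} \<and> u \<in> V \<and> v \<in> V"
  by (simp add: is_graph_def)

lemma graph_edge_sub: "is_graph V E \<Longrightarrow> e \<in> E \<Longrightarrow> e \<subseteq> V"
  using graph_edge by fastforce

lemma graph_edge_in: "is_graph V E \<Longrightarrow> {a,b} \<in> E \<Longrightarrow> a \<in> V \<and> b \<in> V"
  using graph_edge_sub by fastforce

lemma graph_edge_neq: "is_graph V E \<Longrightarrow> {a,b} \<in> E \<Longrightarrow> a \<noteq> b"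
  using graph_edge by (metis doubleton_eq_iff insert_absorb2)

lemma graph_finite_E: "is_graph V E \<Longrightarrow> finite E"
proof -
  assume g: "is_graph V E"
  have "E \<subseteq> Pow V" using graph_edge_sub[OF g] by blast
  moreover have "finite V" using g by (simp add: is_graph_def)
  ultimately show ?thesis by (meson finite_Pow_iff finite_subset)
qed

lemma rel_sym_step: "Rel E x y \<Longrightarrow> Rel E y x"
  by (simp add: insert_commute)

lemma rel_sym: "(Rel E)\<^sup>*\<^sup>* u v \<Longrightarrow> (Rel E)\<^sup>*\<^sup>* v u"
proof (induction rule: rtranclp_induct)
  case base then show ?case by simp
next
  case (step y z)
  then show ?case using rel_sym_step[of y z E]
    by (meson converse_rtranclp_into_rtranclp)
qed

lemma rel_mono: assumes "E \<subseteq> F" "(Rel E)\<^sup>*\<^sup>* u v" shows "(Rel F)\<^sup>*\<^sup>* u v"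
  using assms(2)
proof (induction rule: rtranclp_induct)
  case base then show ?case by simp
next
  case (step y z) then show ?case using assms(1) by (meson rtranclp.rtrancl_into_rtrancl subsetD)
qed

lemma has_cycle_mono: "E \<subseteq> F \<Longrightarrow> has_cycle E \<Longrightarrow> has_cycle F"
  unfolding has_cycle_def by blast

lemma has_cycle_mod: "has_cycle E \<longleftrightarrow> (\<exists>vs. length vs \<ge> 3 \<and> distinct vs \<and>
     (\<forall>i<length vs. {vs ! i, vs ! (Suc i mod length vs)} \<in> E))"
proof
  assume "has_cycle E"
  then obtain vs where v: "length vs \<ge> 3" "distinct vs"
    "\<forall>i. Suc i < length vs \<longrightarrow> {vs ! i, vs ! Suc i} \<in> E" "{last vs, hd vs} \<in> E"
    unfolding has_cycle_def by blast
  have "\<forall>i<length vs. {vs ! i, vs ! (Suc i mod length vs)} \<in> E"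
  proof (intro allI impI)
    fix i assume i: "i < length vs"
    show "{vs ! i, vs ! (Suc i mod length vs)} \<in> E"
    proof (cases "Suc i < length vs")
      case True then show ?thesis using v(3) by simp
    next
      case False
      then have si: "Suc i = length vs" using i by simp
      then have "i = length vs - 1" "Suc i mod length vs = 0" by simp_all
      moreover have "vs \<noteq> []" using v(1) by auto
      ultimately show ?thesis using v(4) by (simp add: last_conv_nth hd_conv_nth)
    qed
  qed
  then show "\<exists>vs. length vs \<ge> 3 \<and> distinct vs \<and>
     (\<forall>i<length vs. {vs ! i, vs ! (Suc i mod length vs)} \<in> E)" using v by blast
next
  assume "\<exists>vs. length vs \<ge> 3 \<and> distinct vs \<and>
     (\<forall>i<length vs. {vs ! i, vs ! (Suc i mod length vs)} \<in> E)"
  then obtain vs where v: "length vs \<ge> 3" "distinct vs"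
     "\<forall>i<length vs. {vs ! i, vs ! (Suc i mod length vs)} \<in> E" by blast
  have "\<forall>i. Suc i < length vs \<longrightarrow> {vs ! i, vs ! Suc i} \<in> E"
  proof (intro allI impI)
    fix i assume "Suc i < length vs"
    then show "{vs ! i, vs ! Suc i} \<in> E" using v(3)[rule_format, of i] by simp
  qed
  moreover have "{last vs, hd vs} \<in> E"
  proof -
    have "length vs - 1 < length vs" using v(1) by simp
    then have "{vs ! (length vs - 1), vs ! (Suc (length vs - 1) mod length vs)} \<in> E" using v(3) by blast
    moreover have "Suc (length vs - 1) = length vs" using v(1) by simp
    then have "Suc (length vs - 1) mod length vs = 0" by simp
    moreover have "vs \<noteq> []" using v(1) by auto
    ultimately show ?thesis by (simp add: last_conv_nth hd_conv_nth)
  qed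
  ultimately show "has_cycle E" using v unfolding has_cycle_def by blast
qed

lemma cyc_prop:
  assumes "p < L" "P p" "\<forall>i<L. Suc i mod L \<noteq> p \<longrightarrow> P i \<longrightarrow> P (Suc i mod L)" "i < L"
  shows "P i"
proof -
  have all: "\<forall>m<L. P ((p + m) mod L)"
  proof (intro allI impI)
    fix m assume "m < L"
    then show "P ((p + m) mod L)"
    proof (induction m)
      case 0 then show ?case using assms by simp
    next
      case (Suc m)
      let ?i = "(p + m) mod L"
      have L0: "L > 0" using assms by simp
      have Pi: "P ?i" using Suc by simp
      have eq: "Suc ?i mod L = (p + Suc m) mod L" by (simp add: mod_Suc_eq)
      have ne: "(p + Suc m) mod L \<noteq> p"
      proof (cases "p + Suc m < L")
        case True then show ?thesis by simp
      next
        case False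
        have lt: "p + Suc m - L < L" using Suc.prems assms(1) by linarith
        have "(p + Suc m) mod L = (p + Suc m - L) mod L" using False by (simp add: le_mod_geq)
        also have "\<dots> = p + Suc m - L" using lt by simp
        finally show ?thesis using Suc.prems False by linarith
      qed
      have "?i < L" using L0 by simp
      then show ?case using assms(3) Pi eq ne by metis
    qed
  qed
  define m where "m = (if p \<le> i then i - p else i + L - p)"
  have "m < L" "(p + m) mod L = i" using assms by (auto simp: m_def)
  then show ?thesis using all by metis
qed

lemma cycle_split:
  assumes g1: "is_graph V1 E1" and g2: "is_graph V2 E2" and int: "V1 \<inter> V2 \<subseteq> {c}"
    and f1: "F1 \<subseteq> E1" and f2: "F2 \<subseteq> E2" and cy: "has_cycle (F1 \<union> F2)"
  shows "has_cycle F1 \<or> has_cycle F2"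
proof -
  obtain vs where v: "length vs \<ge> 3" "distinct vs"
     "\<forall>i<length vs. {vs ! i, vs ! (Suc i mod length vs)} \<in> F1 \<union> F2"
    using cy unfolding has_cycle_mod by blast
  define L where "L = length vs"
  define ed where "ed i = {vs ! i, vs ! (Suc i mod L)}" for i
  have L3: "L \<ge> 3" using v L_def by simp
  obtain p where p: "p < L" "\<forall>j<L. j \<noteq> p \<longrightarrow> vs ! j \<noteq> c"
  proof (cases "c \<in> set vs")
    case True
    then obtain p where "p < L" "vs ! p = c" by (metis L_def in_set_conv_nth)
    moreover have "\<forall>j<L. j \<noteq> p \<longrightarrow> vs ! j \<noteq> c"
      using calculation v(2) L_def by (metis nth_eq_iff_index_eq)
    ultimately show ?thesis using that by blast
  next
    case False
    show ?thesis
    proof (rule that[of 0])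
      show "0 < L" using L3 by simp
      show "\<forall>j<L. j \<noteq> 0 \<longrightarrow> vs ! j \<noteq> c" using False L_def by (metis nth_mem)
    qed
  qed
  have e: "\<forall>i<L. ed i \<in> F1 \<union> F2" using v(3) unfolding ed_def L_def by blast
  have sw: "\<forall>i<L. Suc i mod L \<noteq> p \<longrightarrow> ed i \<in> F \<longrightarrow> ed (Suc i mod L) \<in> F"
    if FF: "(F = F1 \<and> F' = F2) \<or> (F = F2 \<and> F' = F1)" for F F'
  proof (intro allI impI)
    fix i assume i: "i < L" and np: "Suc i mod L \<noteq> p" and ei: "ed i \<in> F"
    let ?j = "Suc i mod L"
    have jL: "?j < L" using L3 by simp
    have w: "vs ! ?j \<noteq> c" using p np jL by blast
    show "ed ?j \<in> F"
    proof (rule ccontr)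
      assume "ed ?j \<notin> F"
      then have ej: "ed ?j \<in> F'" using e jL FF by blast
      have "vs ! ?j \<in> ed i" "vs ! ?j \<in> ed ?j" unfolding ed_def by auto
      then have "vs ! ?j \<in> V1 \<and> vs ! ?j \<in> V2"
        using FF ei ej f1 f2 graph_edge_sub[OF g1] graph_edge_sub[OF g2] by blast
      then show False using int w by blast
    qed
  qed
  have "ed p \<in> F1 \<or> ed p \<in> F2" using e p by blast
  then show ?thesis
  proof
    assume "ed p \<in> F1"
    then have "\<forall>i<L. ed i \<in> F1" using cyc_prop[of p L "\<lambda>i. ed i \<in> F1"] p sw[of F1 F2] by blast
    then have "has_cycle F1" unfolding has_cycle_mod
      apply (intro exI[of _ vs]) using v(1,2) by (simp add: ed_def L_def)
    then show ?thesis by blast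
  next
    assume "ed p \<in> F2"
    then have "\<forall>i<L. ed i \<in> F2" using cyc_prop[of p L "\<lambda>i. ed i \<in> F2"] p sw[of F2 F1] by blast
    then have "has_cycle F2" unfolding has_cycle_mod
      apply (intro exI[of _ vs]) using v(1,2) by (simp add: ed_def L_def)
    then show ?thesis by blast
  qed
qed

definition joinT :: "('a set \<times> 'a set set) \<Rightarrow> ('a set \<times> 'a set set) \<Rightarrow> ('a set \<times> 'a set set)" where
  "joinT T1 T2 = (fst T1 \<union> fst T2, snd T1 \<union> snd T2)"

lemma tree_nonempty: "is_tree A B \<Longrightarrow> A \<noteq> {}"
  by (simp add: is_tree_def connected_graph_def)

lemma graph_union: assumes "is_graph V1 E1" "is_graph V2 E2" shows "is_graph (V1 \<union> V2) (E1 \<union> E2)"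
  unfolding is_graph_def
proof (intro conjI ballI)
  show "finite (V1 \<union> V2)" using assms by (simp add: is_graph_def)
  fix e assume "e \<in> E1 \<union> E2"
  then show "\<exists>u v. u \<noteq> v \<and> e = {u,v} \<and> u \<in> V1 \<union> V2 \<and> v \<in> V1 \<union> V2"
  proof
    assume "e \<in> E1"
    then obtain u v where "u \<noteq> v" "e = {u,v}" "u \<in> V1" "v \<in> V1" using graph_edge[OF assms(1)] by blast
    then show ?thesis by blast
  next
    assume "e \<in> E2"
    then obtain u v where "u \<noteq> v" "e = {u,v}" "u \<in> V2" "v \<in> V2" using graph_edge[OF assms(2)] by blast
    then show ?thesis by blast
  qed
qed

lemma finite_subtrees: "is_graph V E \<Longrightarrow> finite (subtrees V E)"
proof -
  assume g: "is_graph V E"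
  have "subtrees V E \<subseteq> Pow V \<times> Pow E" unfolding subtrees_def by auto
  moreover have "finite (Pow V \<times> Pow E)" using g graph_finite_E[OF g] by (simp add: is_graph_def)
  ultimately show ?thesis by (rule finite_subset)
qed

lemma subtrees_mono: "subtrees V1 E1 \<subseteq> subtrees (V1 \<union> V2) (E1 \<union> E2)"
  unfolding subtrees_def by auto

lemma reach_in: assumes "is_graph A B" "(Rel B)\<^sup>*\<^sup>* u v" shows "v = u \<or> v \<in> A"
  using assms(2)
proof (induction rule: rtranclp_induct)
  case base then show ?case by simp
next
  case (step y z) then show ?case using graph_edge_in[OF assms(1), of y z] by blast
qed

lemma reach_side:
  assumes g1: "is_graph V1 E1" and g2: "is_graph V2 E2" and int: "V1 \<inter> V2 = {c}"
    and F: "F \<subseteq> E1 \<union> E2" and r: "(Rel F)\<^sup>*\<^sup>* u v" and u: "u \<in> V1"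
  shows "((Rel (F \<inter> E1))\<^sup>*\<^sup>* u v \<and> v \<in> V1) \<or> (Rel (F \<inter> E1))\<^sup>*\<^sup>* u c"
  using r
proof (induction rule: rtranclp_induct)
  case base then show ?case using u by simp
next
  case (step y z)
  show ?case
  proof (cases "(Rel (F \<inter> E1))\<^sup>*\<^sup>* u c")
    case True then show ?thesis by simp
  next
    case False
    with step.IH have uy: "(Rel (F \<inter> E1))\<^sup>*\<^sup>* u y" "y \<in> V1" by auto
    have "{y,z} \<in> E1 \<union> E2" using step.hyps(2) F by blast
    then show ?thesis
    proof
      assume "{y,z} \<in> E1"
      then have "Rel (F \<inter> E1) y z" "z \<in> V1" using step.hyps(2) graph_edge_in[OF g1] by auto
      then show ?thesis using uy by (meson rtranclp.rtrancl_into_rtrancl)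
    next
      assume "{y,z} \<in> E2"
      then have "y \<in> V2" using graph_edge_in[OF g2] by blast
      then have "y = c" using uy(2) int by blast
      then show ?thesis using uy(1) by simp
    qed
  qed
qed

lemma edges_disj:
  assumes g1: "is_graph V1 E1" and g2: "is_graph V2 E2" and int: "V1 \<inter> V2 \<subseteq> {c}"
  shows "E1 \<inter> E2 = {}"
proof (rule ccontr)
  assume "E1 \<inter> E2 \<noteq> {}"
  then obtain e where e: "e \<in> E1" "e \<in> E2" by blast
  obtain u v where uv: "u \<noteq> v" "e = {u,v}" using graph_edge[OF g1 e(1)] by blast
  have "e \<subseteq> V1" "e \<subseteq> V2" using graph_edge_sub[OF g1 e(1)] graph_edge_sub[OF g2 e(2)] by auto
  then have "u \<in> V1 \<inter> V2" "v \<in> V1 \<inter> V2" using uv by auto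
  then show False using int uv by blast
qed

lemma join_tree:
  assumes g1: "is_graph V1 E1" and g2: "is_graph V2 E2" and int: "V1 \<inter> V2 = {c}"
    and t1: "(A1,B1) \<in> subtrees V1 E1" "c \<in> A1" and t2: "(A2,B2) \<in> subtrees V2 E2" "c \<in> A2"
  shows "(A1 \<union> A2, B1 \<union> B2) \<in> subtrees (V1 \<union> V2) (E1 \<union> E2)"
proof -
  have T1: "A1 \<subseteq> V1" "B1 \<subseteq> E1" "is_tree A1 B1" using t1 by (auto simp: subtrees_def)
  have T2: "A2 \<subseteq> V2" "B2 \<subseteq> E2" "is_tree A2 B2" using t2 by (auto simp: subtrees_def)
  have gr: "is_graph (A1 \<union> A2) (B1 \<union> B2)" using T1(3) T2(3) graph_union unfolding is_tree_def by blast
  have toc: "(Rel (B1 \<union> B2))\<^sup>*\<^sup>* u c" if "u \<in> A1 \<union> A2" for u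
  proof (cases "u \<in> A1")
    case True
    then have "(Rel B1)\<^sup>*\<^sup>* u c" using T1(3) t1(2) unfolding is_tree_def connected_graph_def by blast
    then show ?thesis by (rule rel_mono[rotated]) blast
  next
    case False
    then have "u \<in> A2" using that by blast
    then have "(Rel B2)\<^sup>*\<^sup>* u c" using T2(3) t2(2) unfolding is_tree_def connected_graph_def by blast
    then show ?thesis by (rule rel_mono[rotated]) blast
  qed
  have conn: "connected_graph (A1 \<union> A2) (B1 \<union> B2)"
    unfolding connected_graph_def
  proof (intro conjI ballI)
    show "A1 \<union> A2 \<noteq> {}" using t1(2) by blast
    fix u v assume uv: "u \<in> A1 \<union> A2" "v \<in> A1 \<union> A2"
    have 1: "(Rel (B1 \<union> B2))\<^sup>*\<^sup>* u c" using toc[OF uv(1)] .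
    have "(Rel (B1 \<union> B2))\<^sup>*\<^sup>* v c" using toc[OF uv(2)] .
    then have 2: "(Rel (B1 \<union> B2))\<^sup>*\<^sup>* c v" by (rule rel_sym)
    from 1 2 have "(Rel (B1 \<union> B2))\<^sup>*\<^sup>* u c" "(Rel (B1 \<union> B2))\<^sup>*\<^sup>* c v" .
    then show "(Rel (B1 \<union> B2))\<^sup>*\<^sup>* u v" by (rule rtranclp_trans)
  qed
  have ac: "\<not> has_cycle (B1 \<union> B2)"
  proof
    assume "has_cycle (B1 \<union> B2)"
    then have "has_cycle B1 \<or> has_cycle B2" using cycle_split[OF g1 g2 _ T1(2) T2(2)] int by blast
    then show False using T1(3) T2(3) unfolding is_tree_def by blast
  qed
  have "A1 \<union> A2 \<subseteq> V1 \<union> V2" "B1 \<union> B2 \<subseteq> E1 \<union> E2" using T1 T2 by blast+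
  then show ?thesis using gr conn ac unfolding subtrees_def is_tree_def by simp
qed

lemma restrict_tree:
  assumes g1: "is_graph V1 E1" and g2: "is_graph V2 E2" and int: "V1 \<inter> V2 = {c}"
    and t: "(A,B) \<in> subtrees (V1 \<union> V2) (E1 \<union> E2)" and c: "c \<in> A"
  shows "(A \<inter> V1, B \<inter> E1) \<in> subtrees V1 E1"
proof -
  have T: "A \<subseteq> V1 \<union> V2" "B \<subseteq> E1 \<union> E2" "is_tree A B" using t by (auto simp: subtrees_def)
  have gA: "is_graph A B" using T(3) by (simp add: is_tree_def)
  have gr: "is_graph (A \<inter> V1) (B \<inter> E1)"
    unfolding is_graph_def
  proof (intro conjI ballI)
    show "finite (A \<inter> V1)" using gA by (simp add: is_graph_def)
    fix e assume e: "e \<in> B \<inter> E1"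
    obtain u v where uv: "u \<noteq> v" "e = {u,v}" "u \<in> A" "v \<in> A" using graph_edge[OF gA] e by blast
    have "e \<subseteq> V1" using graph_edge_sub[OF g1] e by blast
    then show "\<exists>u v. u \<noteq> v \<and> e = {u, v} \<and> u \<in> A \<inter> V1 \<and> v \<in> A \<inter> V1" using uv by blast
  qed
  have cV1: "c \<in> V1" using int by blast
  have toc: "(Rel (B \<inter> E1))\<^sup>*\<^sup>* u c" if "u \<in> A \<inter> V1" for u
  proof -
    have "(Rel B)\<^sup>*\<^sup>* u c" using T(3) c that unfolding is_tree_def connected_graph_def by blast
    from reach_side[OF g1 g2 int T(2) this] that show ?thesis by blast
  qed
  have conn: "connected_graph (A \<inter> V1) (B \<inter> E1)"
    unfolding connected_graph_def
  proof (intro conjI ballI)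
    show "A \<inter> V1 \<noteq> {}" using c cV1 by blast
    fix u v assume uv: "u \<in> A \<inter> V1" "v \<in> A \<inter> V1"
    have 1: "(Rel (B \<inter> E1))\<^sup>*\<^sup>* u c" using toc[OF uv(1)] .
    have "(Rel (B \<inter> E1))\<^sup>*\<^sup>* v c" using toc[OF uv(2)] .
    then have 2: "(Rel (B \<inter> E1))\<^sup>*\<^sup>* c v" by (rule rel_sym)
    from 1 2 have "(Rel (B \<inter> E1))\<^sup>*\<^sup>* u c" "(Rel (B \<inter> E1))\<^sup>*\<^sup>* c v" .
    then show "(Rel (B \<inter> E1))\<^sup>*\<^sup>* u v" by (rule rtranclp_trans)
  qed
  have ac: "\<not> has_cycle (B \<inter> E1)"
    using T(3) has_cycle_mono[of "B \<inter> E1" B] unfolding is_tree_def by blast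
  have "A \<inter> V1 \<subseteq> V1" "B \<inter> E1 \<subseteq> E1" by blast+
  then show ?thesis using gr conn ac unfolding subtrees_def is_tree_def by simp
qed

lemma avoid_tree:
  assumes g1: "is_graph V1 E1" and g2: "is_graph V2 E2" and int: "V1 \<inter> V2 = {c}"
    and t: "(A,B) \<in> subtrees (V1 \<union> V2) (E1 \<union> E2)" and c: "c \<notin> A" and u: "u \<in> A" "u \<in> V1"
  shows "(A,B) \<in> subtrees V1 E1"
proof -
  have T: "A \<subseteq> V1 \<union> V2" "B \<subseteq> E1 \<union> E2" "is_tree A B" using t by (auto simp: subtrees_def)
  have gA: "is_graph A B" using T(3) by (simp add: is_tree_def)
  have AV: "A \<subseteq> V1"
  proof
    fix v assume v: "v \<in> A"
    have r: "(Rel B)\<^sup>*\<^sup>* u v" using T(3) u(1) v unfolding is_tree_def connected_graph_def by blast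
    have "\<not> (Rel (B \<inter> E1))\<^sup>*\<^sup>* u c"
    proof
      assume "(Rel (B \<inter> E1))\<^sup>*\<^sup>* u c"
      then have "(Rel B)\<^sup>*\<^sup>* u c" by (rule rel_mono[rotated]) blast
      then have "c = u \<or> c \<in> A" using reach_in[OF gA] by blast
      then show False using c u by blast
    qed
    then show "v \<in> V1" using reach_side[OF g1 g2 int T(2) r u(2)] by blast
  qed
  have BE: "B \<subseteq> E1"
  proof
    fix e assume e: "e \<in> B"
    obtain x y where xy: "x \<noteq> y" "e = {x,y}" "x \<in> A" "y \<in> A" using graph_edge[OF gA e] by blast
    show "e \<in> E1"
    proof (rule ccontr)
      assume "e \<notin> E1"
      then have "e \<in> E2" using e T(2) by blast
      then have "x \<in> V2" "y \<in> V2" using graph_edge_sub[OF g2] xy by blast+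
      moreover have "x \<in> V1" "y \<in> V1" using AV xy by blast+
      ultimately have "x = c" "y = c" using int by blast+
      then show False using xy(1) by simp
    qed
  qed
  show ?thesis using AV BE T(3) unfolding subtrees_def by auto
qed

lemma glue_decomp:
  assumes g1: "is_graph V1 E1" and g2: "is_graph V2 E2" and int: "V1 \<inter> V2 = {c}"
  shows "subtrees (V1 \<union> V2) (E1 \<union> E2) =
    {T \<in> subtrees V1 E1. c \<notin> fst T} \<union> {T \<in> subtrees V2 E2. c \<notin> fst T} \<union>
    (\<lambda>p. joinT (fst p) (snd p)) ` ({T \<in> subtrees V1 E1. c \<in> fst T} \<times> {T \<in> subtrees V2 E2. c \<in> fst T})"
  (is "?L = ?P1 \<union> ?P2 \<union> ?J")
proof
  have int': "V2 \<inter> V1 = {c}" using int by blast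
  show "?L \<subseteq> ?P1 \<union> ?P2 \<union> ?J"
  proof
    fix T assume T: "T \<in> ?L"
    obtain A B where AB: "T = (A,B)" by (cases T)
    have t: "(A,B) \<in> ?L" using T AB by simp
    have t': "(A,B) \<in> subtrees (V2 \<union> V1) (E2 \<union> E1)" using t by (simp add: Un_commute)
    have TT: "A \<subseteq> V1 \<union> V2" "B \<subseteq> E1 \<union> E2" "is_tree A B" using t by (auto simp: subtrees_def)
    show "T \<in> ?P1 \<union> ?P2 \<union> ?J"
    proof (cases "c \<in> A")
      case True
      have r1: "(A \<inter> V1, B \<inter> E1) \<in> subtrees V1 E1" using restrict_tree[OF g1 g2 int t True] .
      have r2: "(A \<inter> V2, B \<inter> E2) \<in> subtrees V2 E2" using restrict_tree[OF g2 g1 int' t' True] .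
      have c12: "c \<in> A \<inter> V1" "c \<in> A \<inter> V2" using True int by blast+
      have "T = joinT (A \<inter> V1, B \<inter> E1) (A \<inter> V2, B \<inter> E2)" using AB TT unfolding joinT_def by auto
      then show ?thesis using r1 r2 c12 by force
    next
      case False
      obtain u where u: "u \<in> A" using TT(3) tree_nonempty by blast
      then have "u \<in> V1 \<or> u \<in> V2" using TT by blast
      then show ?thesis
      proof
        assume "u \<in> V1"
        then have "(A,B) \<in> subtrees V1 E1" using avoid_tree[OF g1 g2 int t False u] by blast
        then show ?thesis using AB False by simp
      next
        assume "u \<in> V2"
        then have "(A,B) \<in> subtrees V2 E2" using avoid_tree[OF g2 g1 int' t' False u] by blast
        then show ?thesis using AB False by simp
      qed
    qed
  qed
  show "?P1 \<union> ?P2 \<union> ?J \<subseteq> ?L"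
  proof -
    have "?P1 \<subseteq> ?L" using subtrees_mono by blast
    moreover have "?P2 \<subseteq> ?L" using subtrees_mono[of V2 E2 V1 E1] by (simp add: Un_commute) blast
    moreover have "?J \<subseteq> ?L"
    proof
      fix T assume "T \<in> ?J"
      then obtain A1 B1 A2 B2 where "T = joinT (A1,B1) (A2,B2)" "(A1,B1) \<in> subtrees V1 E1" "c \<in> A1"
        "(A2,B2) \<in> subtrees V2 E2" "c \<in> A2" by force
      then show "T \<in> ?L" using join_tree[OF g1 g2 int] unfolding joinT_def by simp
    qed
    ultimately show ?thesis by blast
  qed
qed

lemma join_recover:
  assumes g1: "is_graph V1 E1" and g2: "is_graph V2 E2" and int: "V1 \<inter> V2 = {c}"
    and t1: "T1 \<in> subtrees V1 E1" "c \<in> fst T1" and t2: "T2 \<in> subtrees V2 E2"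
  shows "(fst (joinT T1 T2) \<inter> V1, snd (joinT T1 T2) \<inter> E1) = T1"
proof -
  have a: "fst T1 \<subseteq> V1" "snd T1 \<subseteq> E1" using t1 by (auto simp: subtrees_def)
  have b: "fst T2 \<subseteq> V2" "snd T2 \<subseteq> E2" using t2 by (auto simp: subtrees_def)
  have d: "E1 \<inter> E2 = {}" using edges_disj[OF g1 g2] int by blast
  have "fst T2 \<inter> V1 \<subseteq> fst T1"
  proof
    fix x assume "x \<in> fst T2 \<inter> V1"
    then have "x \<in> V1 \<inter> V2" using b by blast
    then have "x = c" using int by blast
    then show "x \<in> fst T1" using t1(2) by simp
  qed
  then have "fst (joinT T1 T2) \<inter> V1 = fst T1" using a unfolding joinT_def by auto
  moreover have "snd (joinT T1 T2) \<inter> E1 = snd T1" using a b d unfolding joinT_def by auto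
  ultimately show ?thesis by (cases T1) simp
qed

lemma glue_card:
  assumes g1: "is_graph V1 E1" and g2: "is_graph V2 E2" and int: "V1 \<inter> V2 = {c}"
  shows "card {T \<in> subtrees (V1 \<union> V2) (E1 \<union> E2). Q T} =
    card {T \<in> subtrees V1 E1. c \<notin> fst T \<and> Q T} + card {T \<in> subtrees V2 E2. c \<notin> fst T \<and> Q T} +
    card {p \<in> {T \<in> subtrees V1 E1. c \<in> fst T} \<times> {T \<in> subtrees V2 E2. c \<in> fst T}. Q (joinT (fst p) (snd p))}"
proof -
  let ?C1 = "{T \<in> subtrees V1 E1. c \<in> fst T}" and ?C2 = "{T \<in> subtrees V2 E2. c \<in> fst T}"
  let ?X1 = "{T \<in> subtrees V1 E1. c \<notin> fst T \<and> Q T}" and ?X2 = "{T \<in> subtrees V2 E2. c \<notin> fst T \<and> Q T}"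
  let ?Y = "{p \<in> ?C1 \<times> ?C2. Q (joinT (fst p) (snd p))}"
  let ?j = "\<lambda>p. joinT (fst p) (snd p)"
  have int': "V2 \<inter> V1 = {c}" using int by blast
  have gen: "\<And>A B C f. {x \<in> A \<union> B \<union> f ` C. Q x} = {x \<in> A. Q x} \<union> {x \<in> B. Q x} \<union> f ` {y \<in> C. Q (f y)}"
    by blast
  have r1: "{x \<in> {T \<in> subtrees V1 E1. c \<notin> fst T}. Q x} = ?X1" by blast
  have r2: "{x \<in> {T \<in> subtrees V2 E2. c \<notin> fst T}. Q x} = ?X2" by blast
  have eq: "{T \<in> subtrees (V1 \<union> V2) (E1 \<union> E2). Q T} = ?X1 \<union> ?X2 \<union> ?j ` ?Y"
    unfolding glue_decomp[OF g1 g2 int] gen r1 r2 by (rule refl)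
  have f1: "finite (subtrees V1 E1)" "finite (subtrees V2 E2)" using finite_subtrees g1 g2 by blast+
  have fin: "finite ?X1" "finite ?X2" "finite ?Y" using f1 by auto
  have rec1: "fst r = (fst (?j r) \<inter> V1, snd (?j r) \<inter> E1)" if r: "r \<in> ?Y" for r
  proof -
    have "fst r \<in> subtrees V1 E1" "c \<in> fst (fst r)" "snd r \<in> subtrees V2 E2" using r by auto
    then show ?thesis using join_recover[OF g1 g2 int, of "fst r" "snd r"] by simp
  qed
  have rec2: "snd r = (fst (?j r) \<inter> V2, snd (?j r) \<inter> E2)" if r: "r \<in> ?Y" for r
  proof -
    have "snd r \<in> subtrees V2 E2" "c \<in> fst (snd r)" "fst r \<in> subtrees V1 E1" using r by auto
    then have "(fst (joinT (snd r) (fst r)) \<inter> V2, snd (joinT (snd r) (fst r)) \<inter> E2) = snd r"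
      using join_recover[OF g2 g1 int', of "snd r" "fst r"] by simp
    moreover have "joinT (snd r) (fst r) = ?j r" unfolding joinT_def by auto
    ultimately show ?thesis by simp
  qed
  have inj: "inj_on ?j ?Y"
  proof (rule inj_onI)
    fix p q assume p: "p \<in> ?Y" and q: "q \<in> ?Y" and e: "?j p = ?j q"
    have "fst p = fst q" using rec1[OF p] rec1[OF q] e by simp
    moreover have "snd p = snd q" using rec2[OF p] rec2[OF q] e by simp
    ultimately show "p = q" by (simp add: prod_eq_iff)
  qed
  have d12: "?X1 \<inter> ?X2 = {}"
  proof (rule ccontr)
    assume "?X1 \<inter> ?X2 \<noteq> {}"
    then obtain T where T: "T \<in> subtrees V1 E1" "T \<in> subtrees V2 E2" "c \<notin> fst T" by blast
    have "fst T \<subseteq> V1 \<inter> V2" "is_tree (fst T) (snd T)" using T by (auto simp: subtrees_def)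
    moreover obtain x where "x \<in> fst T" using tree_nonempty calculation(2) by blast
    ultimately have "x \<in> V1 \<inter> V2" by blast
    then have "x = c" using int by blast
    then show False using T(3) \<open>x \<in> fst T\<close> by simp
  qed
  have d3: "(?X1 \<union> ?X2) \<inter> ?j ` ?Y = {}"
  proof -
    have "c \<in> fst (?j p)" if "p \<in> ?Y" for p using that unfolding joinT_def by auto
    moreover have "c \<notin> fst T" if "T \<in> ?X1 \<union> ?X2" for T using that by blast
    ultimately show ?thesis by blast
  qed
  have fu: "finite (?X1 \<union> ?X2)" "finite (?j ` ?Y)" using fin by blast+
  have "card (?X1 \<union> ?X2 \<union> ?j ` ?Y) = card (?X1 \<union> ?X2) + card (?j ` ?Y)"
    by (rule card_Un_disjoint[OF fu d3])
  also have "card (?X1 \<union> ?X2) = card ?X1 + card ?X2"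
    by (rule card_Un_disjoint[OF fin(1) fin(2) d12])
  also have "card (?j ` ?Y) = card ?Y" by (rule card_image[OF inj])
  finally have "card (?X1 \<union> ?X2 \<union> ?j ` ?Y) = card ?X1 + card ?X2 + card ?Y" .
  then show ?thesis unfolding eq .
qed

lemma rel_empty: assumes "(Rel {})\<^sup>*\<^sup>* u v" shows "v = u"
  using assms
proof (rule converse_rtranclpE)
  show "u = v \<Longrightarrow> v = u" by simp
  fix y assume "{u, y} \<in> {}" then show "v = u" by simp
qed

lemma no_cycle_empty: "\<not> has_cycle {}"
  unfolding has_cycle_def by simp

lemma tree_single: "is_tree {v} {}"
  by (simp add: is_tree_def is_graph_def connected_graph_def has_cycle_def)

lemma subtrees_char:
  assumes g: "is_graph V E"
  shows "subtrees V E = (\<lambda>v. ({v}, {})) ` V \<union>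
     (\<lambda>B. (\<Union>B, B)) ` {B \<in> Pow E. B \<noteq> {} \<and> connected_graph (\<Union>B) B \<and> \<not> has_cycle B}"
  (is "?L = ?S \<union> ?N")
proof
  show "?L \<subseteq> ?S \<union> ?N"
  proof
    fix T assume T: "T \<in> ?L"
    obtain A B where AB: "T = (A,B)" by (cases T)
    have t: "A \<subseteq> V" "B \<subseteq> E" "is_tree A B" using T unfolding AB subtrees_def by simp_all
    have gA: "is_graph A B" and conn: "connected_graph A B" and ac: "\<not> has_cycle B"
      using t(3) unfolding is_tree_def by simp_all
    show "T \<in> ?S \<union> ?N"
    proof (cases "B = {}")
      case True
      obtain v where v: "v \<in> A" using tree_nonempty[OF t(3)] by blast
      have "A = {v}"
      proof
        show "A \<subseteq> {v}"
        proof
          fix w assume "w \<in> A"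
          then have "(Rel B)\<^sup>*\<^sup>* v w" using conn v unfolding connected_graph_def by blast
          then have "w = v" unfolding True by (rule rel_empty)
          then show "w \<in> {v}" by simp
        qed
        show "{v} \<subseteq> A" using v by blast
      qed
      then have "T = (\<lambda>v. ({v}, {})) v" using AB True by simp
      moreover have "v \<in> V" using v t(1) by blast
      ultimately have "T \<in> ?S" by (rule image_eqI)
      then show ?thesis by (rule UnI1)
    next
      case False
      have "A = \<Union>B"
      proof
        show "\<Union>B \<subseteq> A" using graph_edge_sub[OF gA] by blast
        show "A \<subseteq> \<Union>B"
        proof
          fix a assume a: "a \<in> A"
          obtain e where e: "e \<in> B" using False by blast
          obtain x y where xy: "x \<noteq> y" "e = {x,y}" "x \<in> A" using graph_edge[OF gA e] by blast
          have r: "(Rel B)\<^sup>*\<^sup>* a x" using conn a xy(3) unfolding connected_graph_def by blast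
          show "a \<in> \<Union>B"
          proof (rule converse_rtranclpE[OF r])
            assume "a = x" then show ?thesis using e xy by blast
          next
            fix z assume "{a, z} \<in> B" then show ?thesis by blast
          qed
        qed
      qed
      then have "T = (\<lambda>B. (\<Union>B, B)) B" using AB by simp
      moreover have "B \<in> {B \<in> Pow E. B \<noteq> {} \<and> connected_graph (\<Union>B) B \<and> \<not> has_cycle B}"
        using t(2) False conn ac \<open>A = \<Union>B\<close> by simp
      ultimately have "T \<in> ?N" by (rule image_eqI)
      then show ?thesis by (rule UnI2)
    qed
  qed
  show "?S \<union> ?N \<subseteq> ?L"
  proof
    fix T assume "T \<in> ?S \<union> ?N"
    then show "T \<in> ?L"
    proof
      assume "T \<in> ?S"
      then obtain v where "v \<in> V" "T = ({v}, {})" by blast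
      then show ?thesis using tree_single unfolding subtrees_def by simp
    next
      assume "T \<in> ?N"
      then obtain B where B: "T = (\<Union>B, B)" "B \<subseteq> E" "B \<noteq> {}" "connected_graph (\<Union>B) B" "\<not> has_cycle B"
        by blast
      have UV: "\<Union>B \<subseteq> V" using B(2) graph_edge_sub[OF g] by blast
      have gB: "is_graph (\<Union>B) B"
        unfolding is_graph_def
      proof (intro conjI ballI)
        have "finite V" using g unfolding is_graph_def by simp
        then show "finite (\<Union>B)" using UV by (rule finite_subset[rotated])
        fix e assume e: "e \<in> B"
        then obtain u v where "u \<noteq> v" "e = {u,v}" using graph_edge[OF g] B(2) by blast
        then show "\<exists>u v. u \<noteq> v \<and> e = {u, v} \<and> u \<in> \<Union>B \<and> v \<in> \<Union>B" using e by blast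
      qed
      show ?thesis using B UV gB unfolding subtrees_def is_tree_def by simp
    qed
  qed
qed

lemma subtrees_count:
  assumes g: "is_graph V E"
  shows "card {T \<in> subtrees V E. Q (fst T)} = card {v \<in> V. Q {v}} +
     card {B \<in> Pow E. B \<noteq> {} \<and> connected_graph (\<Union>B) B \<and> \<not> has_cycle B \<and> Q (\<Union>B)}"
proof -
  let ?f = "\<lambda>v. ({v}, {}::'a set set)" and ?h = "\<lambda>B. (\<Union>B, B)"
  let ?X = "{v \<in> V. Q {v}}" and ?Y = "{B \<in> Pow E. B \<noteq> {} \<and> connected_graph (\<Union>B) B \<and> \<not> has_cycle B \<and> Q (\<Union>B)}"
  have gen: "\<And>A C. {T \<in> ?f ` A \<union> ?h ` C. Q (fst T)} = ?f ` {a \<in> A. Q (fst (?f a))} \<union> ?h ` {c \<in> C. Q (fst (?h c))}"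
    by blast
  have e1: "{a \<in> V. Q (fst (?f a))} = ?X" by simp
  have e2: "{c \<in> {B \<in> Pow E. B \<noteq> {} \<and> connected_graph (\<Union>B) B \<and> \<not> has_cycle B}. Q (fst (?h c))} = ?Y"
    by auto
  have eq: "{T \<in> subtrees V E. Q (fst T)} = ?f ` ?X \<union> ?h ` ?Y"
    unfolding subtrees_char[OF g] gen e1 e2 by (rule refl)
  have fV: "finite V" using g by (simp add: is_graph_def)
  have fE: "finite E" using graph_finite_E[OF g] .
  have fin: "finite (?f ` ?X)" "finite (?h ` ?Y)" using fV fE by simp_all
  have d: "?f ` ?X \<inter> ?h ` ?Y = {}" by blast
  have i1: "inj_on ?f ?X" by (rule inj_onI) simp
  have i2: "inj_on ?h ?Y" by (rule inj_onI) simp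
  have "card (?f ` ?X \<union> ?h ` ?Y) = card (?f ` ?X) + card (?h ` ?Y)"
    by (rule card_Un_disjoint[OF fin d])
  also have "\<dots> = card ?X + card ?Y" using card_image[OF i1] card_image[OF i2] by simp
  finally show ?thesis unfolding eq .
qed

definition mapT :: "('a \<Rightarrow> 'b) \<Rightarrow> 'a set \<times> 'a set set \<Rightarrow> 'b set \<times> 'b set set" where
  "mapT f T = (f ` fst T, (`) f ` snd T)"

lemma rel_map: assumes "(Rel B)\<^sup>*\<^sup>* u v" shows "(Rel ((`) f ` B))\<^sup>*\<^sup>* (f u) (f v)"
  using assms
proof (induction rule: rtranclp_induct)
  case base then show ?case by simp
next
  case (step y z)
  have "f ` {y, z} \<in> (`) f ` B" using step.hyps(2) by blast
  then have "Rel ((`) f ` B) (f y) (f z)" by simp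
  then show ?case using step.IH by (meson rtranclp.rtrancl_into_rtrancl)
qed

lemma tree_map:
  assumes inj: "inj_on f V" and A: "A \<subseteq> V" and t: "is_tree A B"
  shows "is_tree (f ` A) ((`) f ` B)"
proof -
  have injA: "inj_on f A" using inj A by (rule inj_on_subset)
  have gA: "is_graph A B" and conn: "connected_graph A B" and ac: "\<not> has_cycle B"
    using t by (auto simp: is_tree_def)
  have gr: "is_graph (f ` A) ((`) f ` B)"
    unfolding is_graph_def
  proof (intro conjI ballI)
    show "finite (f ` A)" using gA by (simp add: is_graph_def)
    fix e' assume "e' \<in> (`) f ` B"
    then obtain e where e: "e \<in> B" "e' = f ` e" by blast
    obtain u v where uv: "u \<noteq> v" "e = {u,v}" "u \<in> A" "v \<in> A" using graph_edge[OF gA e(1)] by blast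
    have "f u \<noteq> f v" using inj_on_contraD[OF injA uv(1) uv(3) uv(4)] .
    moreover have "e' = {f u, f v}" using e uv by simp
    ultimately show "\<exists>u v. u \<noteq> v \<and> e' = {u, v} \<and> u \<in> f ` A \<and> v \<in> f ` A" using uv by blast
  qed
  have cn: "connected_graph (f ` A) ((`) f ` B)"
    unfolding connected_graph_def
  proof (intro conjI ballI)
    show "f ` A \<noteq> {}" using conn by (simp add: connected_graph_def)
    fix x y assume "x \<in> f ` A" "y \<in> f ` A"
    then obtain u v where uv: "u \<in> A" "v \<in> A" "x = f u" "y = f v" by blast
    have "(Rel B)\<^sup>*\<^sup>* u v" using conn uv(1,2) unfolding connected_graph_def by blast
    from rel_map[OF this, of f] show "(Rel ((`) f ` B))\<^sup>*\<^sup>* x y" using uv(3,4) by simp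
  qed
  have na: "\<not> has_cycle ((`) f ` B)"
  proof
    assume "has_cycle ((`) f ` B)"
    then obtain ws where w: "length ws \<ge> 3" "distinct ws"
       "\<forall>i<length ws. {ws ! i, ws ! (Suc i mod length ws)} \<in> (`) f ` B"
      unfolding has_cycle_mod by blast
    let ?g = "inv_into A f"
    let ?L = "length ws"
    have wsA: "set ws \<subseteq> f ` A"
    proof
      fix x assume "x \<in> set ws"
      then obtain i where i: "i < ?L" "ws ! i = x" by (meson in_set_conv_nth)
      then obtain e where "e \<in> B" "{ws ! i, ws ! (Suc i mod ?L)} = f ` e" using w(3) by blast
      moreover have "e \<subseteq> A" using graph_edge_sub[OF gA] calculation(1) by blast
      ultimately show "x \<in> f ` A" using i by blast
    qed
    define vs where "vs = map ?g ws"
    have lv: "length vs = ?L" by (simp add: vs_def)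
    have dv: "distinct vs" unfolding vs_def
      using w(2) inj_on_inv_into[OF wsA] by (simp add: distinct_map)
    have ev: "\<forall>i<length vs. {vs ! i, vs ! (Suc i mod length vs)} \<in> B"
    proof (intro allI impI)
      fix i assume i: "i < length vs"
      then obtain e where e: "e \<in> B" "{ws ! i, ws ! (Suc i mod ?L)} = f ` e" using w(3) lv by auto
      have eA: "e \<subseteq> A" using graph_edge_sub[OF gA e(1)] .
      have j: "Suc i mod ?L < ?L" using w(1) by (intro mod_less_divisor) linarith
      have "{vs ! i, vs ! (Suc i mod length vs)} = ?g ` {ws ! i, ws ! (Suc i mod ?L)}"
        using i j lv by (simp add: vs_def)
      also have "\<dots> = ?g ` f ` e" using e(2) by simp
      also have "\<dots> = e" using inv_into_image_cancel[OF injA eA] .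
      finally show "{vs ! i, vs ! (Suc i mod length vs)} \<in> B" using e(1) by simp
    qed
    have "length vs \<ge> 3" using w(1) lv by simp
    then have "has_cycle B" unfolding has_cycle_mod using dv ev by blast
    then show False using ac by simp
  qed
  show ?thesis using gr cn na by (simp add: is_tree_def)
qed

lemma subtrees_map:
  assumes inj: "inj_on f V" and g: "is_graph V E"
  shows "subtrees (f ` V) ((`) f ` E) = mapT f ` subtrees V E"
proof
  show "mapT f ` subtrees V E \<subseteq> subtrees (f ` V) ((`) f ` E)"
  proof
    fix T assume "T \<in> mapT f ` subtrees V E"
    then obtain T0 where T0: "T0 \<in> subtrees V E" "T = mapT f T0" by (rule imageE)
    obtain A B where AB: "T0 = (A,B)" by (cases T0)
    have t: "A \<subseteq> V" "B \<subseteq> E" "is_tree A B" using T0(1) unfolding AB subtrees_def by simp_all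
    have "is_tree (f ` A) ((`) f ` B)" using tree_map[OF inj t(1) t(3)] .
    moreover have "f ` A \<subseteq> f ` V" using t(1) by (rule image_mono)
    moreover have "(`) f ` B \<subseteq> (`) f ` E" using t(2) by (rule image_mono)
    moreover have "T = (f ` A, (`) f ` B)" using T0(2) AB by (simp add: mapT_def)
    ultimately show "T \<in> subtrees (f ` V) ((`) f ` E)" unfolding subtrees_def by simp
  qed
  show "subtrees (f ` V) ((`) f ` E) \<subseteq> mapT f ` subtrees V E"
  proof
    fix T assume T: "T \<in> subtrees (f ` V) ((`) f ` E)"
    obtain A B where AB: "T = (A,B)" by (cases T)
    have t: "A \<subseteq> f ` V" "B \<subseteq> (`) f ` E" "is_tree A B" using T unfolding AB subtrees_def by simp_all
    let ?g = "inv_into V f"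
    have ig: "inj_on ?g (f ` V)" by (rule inj_on_inv_into) (rule subset_refl)
    have t2: "is_tree (?g ` A) ((`) ?g ` B)" using tree_map[OF ig t(1) t(3)] .
    have A1: "?g ` A \<subseteq> V"
    proof
      fix x assume "x \<in> ?g ` A"
      then obtain y where y: "y \<in> A" "x = ?g y" by blast
      then have "y \<in> f ` V" using t(1) by blast
      then show "x \<in> V" using y(2) by (simp add: inv_into_into)
    qed
    have eB: "?g ` e \<in> E \<and> f ` ?g ` e = e" if e: "e \<in> B" for e
    proof -
      obtain e0 where e0: "e0 \<in> E" "e = f ` e0" using t(2) e by blast
      have e0V: "e0 \<subseteq> V" using graph_edge_sub[OF g e0(1)] .
      have "?g ` e = e0" unfolding e0(2) using inv_into_image_cancel[OF inj e0V] .
      moreover have "e \<subseteq> f ` V" using e0(2) e0V by blast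
      then have "f ` ?g ` e = e" by (rule image_inv_into_cancel[OF refl])
      ultimately show ?thesis using e0(1) by simp
    qed
    have B1: "(`) ?g ` B \<subseteq> E" using eB by blast
    have "f ` ?g ` A = A" using t(1) by (rule image_inv_into_cancel[OF refl])
    moreover have "(`) f ` (`) ?g ` B = B"
    proof -
      have "(`) f ` (`) ?g ` B = (\<lambda>e. f ` ?g ` e) ` B" by (simp add: image_image)
      also have "\<dots> = (\<lambda>e. e) ` B" by (rule image_cong[OF refl]) (use eB in blast)
      finally show ?thesis by simp
    qed
    ultimately have "T = mapT f (?g ` A, (`) ?g ` B)" using AB by (simp add: mapT_def)
    moreover have "(?g ` A, (`) ?g ` B) \<in> subtrees V E" using t2 A1 B1 unfolding subtrees_def by simp
    ultimately show "T \<in> mapT f ` subtrees V E" by (rule image_eqI)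
  qed
qed

lemma mapT_inj:
  assumes inj: "inj_on f V"
  shows "inj_on (mapT f) (subtrees V E)"
proof (rule inj_onI)
  fix T T' assume T: "T \<in> subtrees V E" and T': "T' \<in> subtrees V E" and e: "mapT f T = mapT f T'"
  have sx: "fst X \<subseteq> V \<and> is_graph (fst X) (snd X)" if "X \<in> subtrees V E" for X
    using that by (cases X) (simp add: subtrees_def is_tree_def)
  have s1: "fst T \<subseteq> V" "fst T' \<subseteq> V" "is_graph (fst T) (snd T)" "is_graph (fst T') (snd T')"
    using sx[OF T] sx[OF T'] by simp_all
  have "snd T \<subseteq> Pow (fst T)" "snd T' \<subseteq> Pow (fst T')"
    using graph_edge_sub[OF s1(3)] graph_edge_sub[OF s1(4)] by blast+
  then have s: "fst T \<subseteq> V" "fst T' \<subseteq> V" "snd T \<subseteq> Pow V" "snd T' \<subseteq> Pow V" using s1 by blast+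
  have e1: "f ` fst T = f ` fst T'" and e2: "(`) f ` snd T = (`) f ` snd T'" using e by (simp_all add: mapT_def)
  have "fst T = fst T'" using inj_on_image_eq_iff[OF inj s(1) s(2)] e1 by simp
  moreover have "snd T = snd T'" using inj_on_image_eq_iff[OF inj_on_image_Pow[OF inj] s(3) s(4)] e2 by simp
  ultimately show "T = T'" by (simp add: prod_eq_iff)
qed

lemma count_map:
  assumes inj: "inj_on f V" and g: "is_graph V E"
  shows "card {T \<in> subtrees (f ` V) ((`) f ` E). Q (fst T)} = card {T \<in> subtrees V E. Q (f ` fst T)}"
proof -
  have gen: "\<And>S. {T \<in> mapT f ` S. Q (fst T)} = mapT f ` {T \<in> S. Q (fst (mapT f T))}" by blast
  have fm: "\<And>T. fst (mapT f T) = f ` fst T" by (simp add: mapT_def)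
  have "{T \<in> subtrees (f ` V) ((`) f ` E). Q (fst T)} = mapT f ` {T \<in> subtrees V E. Q (f ` fst T)}"
    unfolding subtrees_map[OF inj g] gen fm by (rule refl)
  moreover have "inj_on (mapT f) {T \<in> subtrees V E. Q (f ` fst T)}"
    using mapT_inj[OF inj] by (rule inj_on_subset) blast
  ultimately show ?thesis by (simp add: card_image)
qed

fun pe :: "'a list \<Rightarrow> 'a set set" where
  "pe (x # y # xs) = insert {x,y} (pe (y # xs))"
| "pe _ = {}"

lemma pe_graph: "distinct xs \<Longrightarrow> is_graph (set xs) (pe xs)"
proof (induction xs rule: pe.induct)
  case (1 x y xs)
  have g: "is_graph (set (y # xs)) (pe (y # xs))" using 1 by simp
  have "is_graph {x,y} {{x,y}}" using 1(2) unfolding is_graph_def by auto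
  from graph_union[OF this g] show ?case by (simp add: insert_absorb)
qed (auto simp: is_graph_def)

lemma single_edge_acyclic: "\<not> has_cycle {{x,y}}"
proof
  assume "has_cycle {{x,y}}"
  then obtain vs where v: "length vs \<ge> 3" "distinct vs"
     "\<forall>i<length vs. {vs ! i, vs ! (Suc i mod length vs)} = {x,y}"
    unfolding has_cycle_mod by auto
  have l: "0 < length vs" "1 < length vs" "2 < length vs" using v(1) by linarith+
  have m: "Suc 0 mod length vs = 1" "Suc 1 mod length vs = 2" using v(1) by simp_all
  have "{vs ! 0, vs ! (Suc 0 mod length vs)} = {x,y}" using v(3) l(1) by blast
  then have a: "{vs ! 0, vs ! 1} = {x,y}" using m by simp
  have "{vs ! 1, vs ! (Suc 1 mod length vs)} = {x,y}" using v(3) l(2) by blast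
  then have b: "{vs ! 1, vs ! 2} = {x,y}" using m by simp
  have c: "vs ! 0 \<noteq> vs ! 1" using nth_eq_iff_index_eq[OF v(2) l(1) l(2)] by simp
  have d: "vs ! 0 \<noteq> vs ! 2" using nth_eq_iff_index_eq[OF v(2) l(1) l(3)] by simp
  have "{vs ! 0, vs ! 1} = {vs ! 1, vs ! 2}" using a b by simp
  then show False using c d by (metis doubleton_eq_iff)
qed

lemma pe_acyclic: "distinct xs \<Longrightarrow> \<not> has_cycle (pe xs)"
proof (induction xs rule: pe.induct)
  case (1 x y xs)
  have g2: "is_graph (set (y # xs)) (pe (y # xs))" using pe_graph 1(2) by (metis distinct.simps(2))
  have g1: "is_graph {x,y} {{x,y}}" using 1(2) unfolding is_graph_def by auto
  have int: "{x,y} \<inter> set (y # xs) \<subseteq> {y}" using 1(2) by auto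
  have ih: "\<not> has_cycle (pe (y # xs))" using 1 by simp
  show ?case
  proof
    assume "has_cycle (pe (x # y # xs))"
    then have "has_cycle ({{x,y}} \<union> pe (y # xs))" by simp
    then have "has_cycle {{x,y}} \<or> has_cycle (pe (y # xs))"
      using cycle_split[OF g1 g2 int subset_refl subset_refl] by blast
    then show False using ih single_edge_acyclic[of x y] by blast
  qed
qed (auto simp: no_cycle_empty)

definition E6L :: "nat set list" where "E6L = [{0,1},{1,2},{2,3},{3,4},{4,5},{5,0}]"
definition stepB :: "nat set set \<Rightarrow> nat set \<Rightarrow> nat set" where
  "stepB B S = S \<union> \<Union>{e\<in>B. e \<inter> S \<noteq> {}}"
definition reachB :: "nat set set \<Rightarrow> nat set" where
  "reachB B = fold (\<lambda>_. stepB B) [1::nat,2,3,4,5,6] {Min (\<Union>B)}"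
definition conn_ok :: "nat set set \<Rightarrow> bool" where "conn_ok B = (\<Union>B \<subseteq> reachB B)"
definition conn_bad :: "nat set set \<Rightarrow> bool" where "conn_bad B = (stepB B (reachB B) \<subseteq> reachB B)"
definition PL :: "nat list list" where
  "PL = [[1,2,3,4,5,0],[2,3,4,5,0,1],[3,4,5,0,1,2],[4,5,0,1,2,3],[5,0,1,2,3,4],[0,1,2,3,4,5]]"

lemma comp_distinct: "distinct E6L"
  unfolding E6L_def by code_simp

lemma comp_dich: "list_all (\<lambda>ys. ys = [] \<or> conn_ok (set ys) \<or> conn_bad (set ys)) (subseqs E6L)"
  unfolding E6L_def by code_simp

lemma comp_paths: "list_all (\<lambda>e. list_ex (\<lambda>xs. distinct xs \<and> set E6L - {e} \<subseteq> pe xs) PL) E6L"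
  unfolding E6L_def PL_def by code_simp

lemma comp_pairs: "list_all (\<lambda>e. \<exists>a\<in>e. \<exists>b\<in>e. e = {a,b}) E6L"
  unfolding E6L_def by code_simp

lemma comp_cycle: "list_all (\<lambda>i. {[0::nat,1,2,3,4,5] ! i, [0::nat,1,2,3,4,5] ! (Suc i mod 6)} \<in> set E6L) [0..<6]"
  unfolding E6L_def by code_simp

lemma E6_pairs: assumes "e \<in> set E6L" shows "\<exists>a b. e = {a,b}"
proof -
  have "\<exists>a\<in>e. \<exists>b\<in>e. e = {a,b}" using comp_pairs assms unfolding list_all_iff by blast
  then show ?thesis by blast
qed

lemma E6_cyclic: "has_cycle (set E6L)"
  unfolding has_cycle_mod
proof (intro exI[of _ "[0::nat,1,2,3,4,5]"] conjI)
  show "3 \<le> length [0::nat,1,2,3,4,5]" by simp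
  show "distinct [0::nat,1,2,3,4,5]" by simp
  show "\<forall>i<length [0::nat,1,2,3,4,5]. {[0::nat,1,2,3,4,5] ! i, [0::nat,1,2,3,4,5] ! (Suc i mod length [0::nat,1,2,3,4,5])} \<in> set E6L"
    using comp_cycle by (simp add: list_all_iff)
qed

lemma step_sound:
  assumes pairs: "\<forall>e\<in>B. \<exists>a b. e = {a,b}" and v: "v \<in> stepB B S"
  shows "\<exists>u\<in>S. (Rel B)\<^sup>*\<^sup>* u v"
proof (cases "v \<in> S")
  case True then show ?thesis by blast
next
  case False
  then obtain e where e: "e \<in> B" "e \<inter> S \<noteq> {}" "v \<in> e" using v unfolding stepB_def by blast
  obtain w where w: "w \<in> e" "w \<in> S" using e(2) by blast
  obtain a b where ab: "e = {a,b}" using pairs e(1) by blast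
  have "w \<noteq> v" using w False by blast
  then have "e = {w, v}" using ab w(1) e(3) by auto
  then have "Rel B w v" using e(1) by simp
  then have "(Rel B)\<^sup>*\<^sup>* w v" by (rule r_into_rtranclp)
  then show ?thesis using w(2) by (rule bexI)
qed

lemma fold_sound:
  assumes pairs: "\<forall>e\<in>B. \<exists>a b. e = {a,b}"
  shows "v \<in> fold (\<lambda>_. stepB B) ks S \<Longrightarrow> \<exists>u\<in>S. (Rel B)\<^sup>*\<^sup>* u v"
proof (induction ks arbitrary: S)
  case Nil then show ?case by auto
next
  case (Cons k ks)
  have "v \<in> fold (\<lambda>_. stepB B) ks (stepB B S)" using Cons.prems by simp
  then obtain u' where u': "u' \<in> stepB B S" "(Rel B)\<^sup>*\<^sup>* u' v" using Cons.IH by blast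
  obtain u where u: "u \<in> S" "(Rel B)\<^sup>*\<^sup>* u u'" using step_sound[OF pairs u'(1)] by blast
  have "(Rel B)\<^sup>*\<^sup>* u v" using u(2) u'(2) by (rule rtranclp_trans)
  then show ?case using u(1) by (rule bexI)
qed

lemma fold_mono: "S \<subseteq> fold (\<lambda>_. stepB B) ks S"
proof (induction ks arbitrary: S)
  case Nil then show ?case by simp
next
  case (Cons k ks)
  have "S \<subseteq> stepB B S" unfolding stepB_def by blast
  then show ?case using Cons[of "stepB B S"] by simp
qed

lemma closed_reach:
  assumes cl: "stepB B S \<subseteq> S" and u: "u \<in> S" and r: "(Rel B)\<^sup>*\<^sup>* u v"
  shows "v \<in> S"
  using r
proof (induction rule: rtranclp_induct)
  case base then show ?case using u .
next
  case (step y z)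
  have "{y,z} \<inter> S \<noteq> {}" using step.IH by blast
  then have "z \<in> stepB B S" using step.hyps(2) unfolding stepB_def by blast
  then show ?case using cl by blast
qed

lemma min_in:
  assumes fin: "finite B" "\<forall>e\<in>B. \<exists>a b. e = {a,b}" and ne: "B \<noteq> {}"
  shows "finite (\<Union>B)" "Min (\<Union>B) \<in> \<Union>B"
proof -
  show f: "finite (\<Union>B)" using fin by auto
  have ne': "\<Union>B \<noteq> {}" using fin(2) ne by blast
  show "Min (\<Union>B) \<in> \<Union>B" using Min_in[OF f ne'] .
qed

lemma conn_ok_sound:
  assumes fin: "finite B" "\<forall>e\<in>B. \<exists>a b. e = {a,b}" and ne: "B \<noteq> {}" and ok: "conn_ok B"
  shows "connected_graph (\<Union>B) B"
  unfolding connected_graph_def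
proof (intro conjI ballI)
  let ?m = "Min (\<Union>B)"
  have m: "?m \<in> \<Union>B" using min_in[OF fin ne] by blast
  show "\<Union>B \<noteq> {}" using m by blast
  have rm: "(Rel B)\<^sup>*\<^sup>* ?m w" if "w \<in> \<Union>B" for w
  proof -
    have "w \<in> reachB B" using ok that unfolding conn_ok_def by blast
    then have "\<exists>u\<in>{?m}. (Rel B)\<^sup>*\<^sup>* u w" using fold_sound[OF fin(2)] unfolding reachB_def by blast
    then show ?thesis by simp
  qed
  fix u v assume uv: "u \<in> \<Union>B" "v \<in> \<Union>B"
  have 1: "(Rel B)\<^sup>*\<^sup>* u ?m" using rm[OF uv(1)] by (rule rel_sym)
  have 2: "(Rel B)\<^sup>*\<^sup>* ?m v" using rm[OF uv(2)] .
  from 1 2 show "(Rel B)\<^sup>*\<^sup>* u v" by (rule rtranclp_trans)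
qed

lemma conn_bad_sound:
  assumes fin: "finite B" "\<forall>e\<in>B. \<exists>a b. e = {a,b}" and ne: "B \<noteq> {}" and bad: "conn_bad B"
    and nok: "\<not> conn_ok B"
  shows "\<not> connected_graph (\<Union>B) B"
proof
  assume c: "connected_graph (\<Union>B) B"
  let ?m = "Min (\<Union>B)"
  have m: "?m \<in> \<Union>B" using min_in[OF fin ne] by blast
  obtain v where v: "v \<in> \<Union>B" "v \<notin> reachB B" using nok unfolding conn_ok_def by blast
  have "(Rel B)\<^sup>*\<^sup>* ?m v" using c m v(1) unfolding connected_graph_def by blast
  moreover have "?m \<in> reachB B" unfolding reachB_def using fold_mono by blast
  ultimately have "v \<in> reachB B" using closed_reach[of B "reachB B" ?m v] bad unfolding conn_bad_def by blast
  then show False using v(2) by blast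
qed

lemma sub_E6:
  assumes ys: "ys \<in> set (subseqs E6L)"
  shows "distinct ys" "set ys \<subseteq> set E6L"
proof -
  show "distinct ys" using subseqs_distinctD[OF ys comp_distinct] .
  have "set ys \<in> set ` set (subseqs E6L)" using ys by blast
  then show "set ys \<subseteq> set E6L" unfolding subseqs_powset by blast
qed

lemma good_eq:
  assumes ys: "ys \<in> set (subseqs E6L)"
  shows "(set ys \<noteq> {} \<and> connected_graph (\<Union>(set ys)) (set ys) \<and> \<not> has_cycle (set ys)) \<longleftrightarrow>
         (ys \<noteq> [] \<and> length ys \<noteq> 6 \<and> conn_ok (set ys))"
proof -
  have d: "distinct ys" and sub: "set ys \<subseteq> set E6L" using sub_E6[OF ys] by blast+
  have cE: "card (set E6L) = 6" using comp_distinct by (simp add: distinct_card E6L_def)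
  have cy: "card (set ys) = length ys" using d by (simp add: distinct_card)
  have len: "length ys = 6 \<longleftrightarrow> set ys = set E6L"
  proof
    assume "length ys = 6"
    then show "set ys = set E6L" using card_subset_eq[OF _ sub] cy cE by simp
  next
    assume "set ys = set E6L"
    then show "length ys = 6" using cy cE by simp
  qed
  have pairs: "\<forall>e\<in>set ys. \<exists>a b. e = {a,b}" using sub E6_pairs by blast
  have fin: "finite (set ys)" by simp
  show ?thesis
  proof (cases "set ys = set E6L")
    case True
    then show ?thesis using E6_cyclic len by simp
  next
    case False
    then obtain e where e: "e \<in> set E6L" "e \<notin> set ys" using sub by blast
    obtain xs where xs: "distinct xs" "set E6L - {e} \<subseteq> pe xs"
      using comp_paths e(1) by (auto simp: list_all_iff list_ex_iff)
    have "set ys \<subseteq> pe xs" using xs(2) sub e(2) by blast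
    then have ac: "\<not> has_cycle (set ys)" using pe_acyclic[OF xs(1)] has_cycle_mono by blast
    have "length ys \<noteq> 6" using False len by simp
    moreover have "ys \<noteq> [] \<Longrightarrow> connected_graph (\<Union>(set ys)) (set ys) \<longleftrightarrow> conn_ok (set ys)"
    proof -
      assume ne: "ys \<noteq> []"
      then have ne': "set ys \<noteq> {}" by simp
      have "conn_ok (set ys) \<or> conn_bad (set ys)" using comp_dich ys ne by (auto simp: list_all_iff)
      then show ?thesis using conn_ok_sound[OF fin pairs ne'] conn_bad_sound[OF fin pairs ne'] by blast
    qed
    ultimately show ?thesis using ac by auto
  qed
qed

lemma graph_cycle: assumes d: "distinct xs" and l: "length xs \<ge> 2"
  shows "is_graph (set xs) (cycle_edges xs)"
  unfolding is_graph_def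
proof (intro conjI ballI)
  show "finite (set xs)" by simp
  fix e assume "e \<in> cycle_edges xs"
  then obtain k where k: "k < length xs" "e = {xs ! k, xs ! ((k + 1) mod length xs)}"
    unfolding cycle_edges_def by blast
  have j: "(k + 1) mod length xs < length xs" using l by (intro mod_less_divisor) linarith
  have "(k + 1) mod length xs \<noteq> k"
  proof (cases "k + 1 < length xs")
    case True then show ?thesis by simp
  next
    case False
    then have "k + 1 = length xs" using k(1) by simp
    then show ?thesis using l by simp
  qed
  then have "xs ! k \<noteq> xs ! ((k + 1) mod length xs)" using nth_eq_iff_index_eq[OF d k(1) j] by simp
  moreover have "xs ! k \<in> set xs" "xs ! ((k + 1) mod length xs) \<in> set xs" using k(1) j by simp_all
  ultimately show "\<exists>u v. u \<noteq> v \<and> e = {u, v} \<and> u \<in> set xs \<and> v \<in> set xs"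
    using k(2) by blast
qed

lemma cycle_edges_image: "cycle_edges xs = (\<lambda>k. {xs ! k, xs ! (Suc k mod length xs)}) ` set [0..<length xs]"
  unfolding cycle_edges_def by auto

lemma E6_base: "cycle_edges [0..<6] = set E6L"
proof -
  have "(\<lambda>k. {[0..<6] ! k, [0..<6] ! (Suc k mod length [0..<6])}) ` set [0..<length [0..<6::nat]] = set E6L"
    unfolding E6L_def by code_simp
  then show ?thesis unfolding cycle_edges_image .
qed

lemma E6_graph: "is_graph (set [0..<6]) (set E6L)"
  using graph_cycle[of "[0..<6]"] E6_base by simp

lemma count_E6:
  "card {T \<in> subtrees (set [0..<6]) (set E6L). Q (fst T)} = card {v \<in> set [0..<6]. Q {v}} +
     length (filter (\<lambda>ys. ys \<noteq> [] \<and> length ys \<noteq> 6 \<and> conn_ok (set ys) \<and> Q (\<Union>(set ys))) (subseqs E6L))"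
proof -
  let ?P = "\<lambda>B. B \<noteq> {} \<and> connected_graph (\<Union>B) B \<and> \<not> has_cycle B \<and> Q (\<Union>B)"
  have pw: "Pow (set E6L) = set (map set (subseqs E6L))" using subseqs_powset[of E6L] by simp
  have eqs: "{B \<in> Pow (set E6L). ?P B} = set (filter ?P (map set (subseqs E6L)))"
    unfolding pw set_filter by (rule refl)
  have dl: "distinct (filter ?P (map set (subseqs E6L)))"
    using distinct_set_subseqs[OF comp_distinct] by (rule distinct_filter)
  have "card {B \<in> Pow (set E6L). ?P B} = length (filter ?P (map set (subseqs E6L)))"
    unfolding eqs by (rule distinct_card[OF dl])
  also have "\<dots> = length (filter (?P \<circ> set) (subseqs E6L))" by (simp add: filter_map)
  also have "filter (?P \<circ> set) (subseqs E6L) =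
      filter (\<lambda>ys. ys \<noteq> [] \<and> length ys \<noteq> 6 \<and> conn_ok (set ys) \<and> Q (\<Union>(set ys))) (subseqs E6L)"
  proof (rule filter_cong[OF refl])
    fix ys assume "ys \<in> set (subseqs E6L)"
    from good_eq[OF this] show "(?P \<circ> set) ys = (ys \<noteq> [] \<and> length ys \<noteq> 6 \<and> conn_ok (set ys) \<and> Q (\<Union>(set ys)))"
      by auto
  qed
  finally have "card {B \<in> Pow (set E6L). ?P B} =
      length (filter (\<lambda>ys. ys \<noteq> [] \<and> length ys \<noteq> 6 \<and> conn_ok (set ys) \<and> Q (\<Union>(set ys))) (subseqs E6L))" .
  then show ?thesis unfolding subtrees_count[OF E6_graph, of Q] by (rule arg_cong)
qed

lemma cycle_edges_map: "cycle_edges (map f xs) = (`) f ` cycle_edges xs"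
proof -
  have "cycle_edges (map f xs) = (\<lambda>k. {map f xs ! k, map f xs ! (Suc k mod length xs)}) ` set [0..<length xs]"
    using cycle_edges_image[of "map f xs"] by simp
  also have "\<dots> = (\<lambda>k. f ` {xs ! k, xs ! (Suc k mod length xs)}) ` set [0..<length xs]"
  proof (rule image_cong[OF refl])
    fix k assume "k \<in> set [0..<length xs]"
    then have k: "k < length xs" by simp
    then have "Suc k mod length xs < length xs" by (intro mod_less_divisor) linarith
    then show "{map f xs ! k, map f xs ! (Suc k mod length xs)} = f ` {xs ! k, xs ! (Suc k mod length xs)}"
      using k by simp
  qed
  also have "\<dots> = (`) f ` cycle_edges xs" unfolding cycle_edges_image[of xs] image_image by (rule refl)
  finally show ?thesis .
qed

definition hcount :: "(bool \<Rightarrow> bool \<Rightarrow> bool) \<Rightarrow> nat \<Rightarrow> nat" where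
  "hcount P i = card {v \<in> set [0..<6]. P (0 \<in> {v}) (i \<in> {v})} +
     length (filter (\<lambda>ys. ys \<noteq> [] \<and> length ys \<noteq> 6 \<and> conn_ok (set ys) \<and> P (0 \<in> \<Union>(set ys)) (i \<in> \<Union>(set ys))) (subseqs E6L))"

lemma hex_transfer:
  assumes d: "distinct h" and l: "length h = 6" and i: "i < 6"
  shows "card {T \<in> subtrees (set h) (cycle_edges h). P (h ! 0 \<in> fst T) (h ! i \<in> fst T)} = hcount P i"
proof -
  let ?f = "(!) h"
  let ?V = "set [0..<6::nat]"
  have hm: "h = map ?f [0..<6]" using map_nth[of h] l by simp
  have inj: "inj_on ?f ?V" using d l by (intro inj_on_nth) auto
  have V: "set h = ?f ` ?V" using hm by (metis set_map)
  have E: "cycle_edges h = (`) ?f ` set E6L" using hm cycle_edges_map[of ?f "[0..<6]"] E6_base by metis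
  have "card {T \<in> subtrees (set h) (cycle_edges h). P (h ! 0 \<in> fst T) (h ! i \<in> fst T)} =
        card {T \<in> subtrees ?V (set E6L). P (h ! 0 \<in> ?f ` fst T) (h ! i \<in> ?f ` fst T)}"
    unfolding V E by (rule count_map[OF inj E6_graph])
  also have "{T \<in> subtrees ?V (set E6L). P (h ! 0 \<in> ?f ` fst T) (h ! i \<in> ?f ` fst T)} =
             {T \<in> subtrees ?V (set E6L). P (0 \<in> fst T) (i \<in> fst T)}"
  proof (rule Collect_cong)
    fix T
    show "(T \<in> subtrees ?V (set E6L) \<and> P (h ! 0 \<in> ?f ` fst T) (h ! i \<in> ?f ` fst T)) =
          (T \<in> subtrees ?V (set E6L) \<and> P (0 \<in> fst T) (i \<in> fst T))"
    proof (cases "T \<in> subtrees ?V (set E6L)")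
      case True
      then have s: "fst T \<subseteq> ?V" by (cases T) (simp add: subtrees_def)
      have "h ! 0 \<in> ?f ` fst T \<longleftrightarrow> 0 \<in> fst T" by (rule inj_on_image_mem_iff[OF inj _ s]) simp
      moreover have "h ! i \<in> ?f ` fst T \<longleftrightarrow> i \<in> fst T" by (rule inj_on_image_mem_iff[OF inj _ s]) (simp add: i)
      ultimately show ?thesis by simp
    next
      case False then show ?thesis by simp
    qed
  qed
  also have "card {T \<in> subtrees ?V (set E6L). P (0 \<in> fst T) (i \<in> fst T)} = hcount P i"
    unfolding hcount_def using count_E6[of "\<lambda>A. P (0 \<in> A) (i \<in> A)"] by simp
  finally show ?thesis .
qed

lemma hc_vals:
  "hcount (\<lambda>a b. a) 1 = 21" "hcount (\<lambda>a b. a) 2 = 21" "hcount (\<lambda>a b. a) 3 = 21"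
  "hcount (\<lambda>a b. \<not> a) 1 = 15" "hcount (\<lambda>a b. \<not> a) 2 = 15" "hcount (\<lambda>a b. \<not> a) 3 = 15"
  "hcount (\<lambda>a b. a \<and> b) 1 = 16" "hcount (\<lambda>a b. a \<and> b) 2 = 13" "hcount (\<lambda>a b. a \<and> b) 3 = 12"
  "hcount (\<lambda>a b. \<not> a \<and> b) 1 = 5" "hcount (\<lambda>a b. \<not> a \<and> b) 2 = 8" "hcount (\<lambda>a b. \<not> a \<and> b) 3 = 9"
  unfolding hcount_def E6L_def by code_simp+

lemma entry_le: "d \<le> 5 \<Longrightarrow> spiro_entry d k \<le> 5 * k"
  by (cases k) auto

lemma hex_len: "length (hexagon d k) = 6"
  by (simp add: hexagon_def)

lemma hex_distinct: "d \<le> 5 \<Longrightarrow> distinct (hexagon d k)"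
  using entry_le[of d k] by (simp add: hexagon_def)

lemma V_suc: assumes "d \<le> 5" shows "spiro_V (Suc k) = spiro_V k \<union> set (hexagon d k)"
proof -
  have e: "spiro_entry d k \<le> 5 * k" using entry_le[OF assms] .
  show ?thesis
  proof (rule set_eqI)
    fix x
    show "x \<in> spiro_V (Suc k) \<longleftrightarrow> x \<in> spiro_V k \<union> set (hexagon d k)"
      unfolding spiro_V_def hexagon_def using e by (simp; presburger)
  qed
qed

lemma V_int: assumes "d \<le> 5" shows "spiro_V k \<inter> set (hexagon d k) = {spiro_entry d k}"
proof -
  have e: "spiro_entry d k \<le> 5 * k" using entry_le[OF assms] .
  show ?thesis
  proof (rule set_eqI)
    fix x
    show "x \<in> spiro_V k \<inter> set (hexagon d k) \<longleftrightarrow> x \<in> {spiro_entry d k}"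
      unfolding spiro_V_def hexagon_def using e by (simp; presburger)
  qed
qed

lemma E_suc: "spiro_E d (Suc k) = spiro_E d k \<union> cycle_edges (hexagon d k)"
  by (simp add: spiro_E_def lessThan_Suc Un_commute)

lemma graph_hex: "d \<le> 5 \<Longrightarrow> is_graph (set (hexagon d k)) (cycle_edges (hexagon d k))"
  using graph_cycle[OF hex_distinct] hex_len by simp

lemma graph_chain: assumes "d \<le> 5" shows "is_graph (spiro_V k) (spiro_E d k)"
proof (induction k)
  case 0 then show ?case by (simp add: spiro_V_def spiro_E_def is_graph_def)
next
  case (Suc k)
  show ?case unfolding V_suc[OF assms] E_suc using graph_union[OF Suc graph_hex[OF assms]] .
qed

definition AA :: "nat \<Rightarrow> nat \<Rightarrow> nat" where "AA d k = card (subtrees (spiro_V k) (spiro_E d k))"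
definition FF :: "nat \<Rightarrow> nat \<Rightarrow> nat" where
  "FF d k = card {T \<in> subtrees (spiro_V k) (spiro_E d k). spiro_entry d k \<in> fst T}"
definition gg :: "nat \<Rightarrow> nat" where "gg d = (if d = 1 then 16 else if d = 2 then 13 else 12)"

lemma base0: "AA d 0 = 1" "FF d 0 = 1"
proof -
  have g: "is_graph {0::nat} {}" by (simp add: is_graph_def)
  have "subtrees {0::nat} {} = {({0}, {})}" unfolding subtrees_char[OF g] by auto
  moreover have "spiro_V 0 = {0}" "spiro_E d 0 = {}" by (simp_all add: spiro_V_def spiro_E_def)
  moreover have "{T \<in> {({0::nat}, {}::nat set set)}. 0 \<in> fst T} = {({0}, {})}" by auto
  ultimately show "AA d 0 = 1" "FF d 0 = 1" unfolding AA_def FF_def by simp_all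
qed

lemma card_part: "finite S \<Longrightarrow> card {x \<in> S. P x} + card {x \<in> S. \<not> P x} = card S"
proof -
  assume f: "finite S"
  have "S = {x \<in> S. P x} \<union> {x \<in> S. \<not> P x}" by blast
  moreover have "card ({x \<in> S. P x} \<union> {x \<in> S. \<not> P x}) = card {x \<in> S. P x} + card {x \<in> S. \<not> P x}"
    by (rule card_Un_disjoint) (use f in auto)
  ultimately show ?thesis by simp
qed

lemma recs:
  assumes d: "d \<in> {1,2,3}"
  shows "AA d (Suc k) + FF d k = AA d k + 15 + 21 * FF d k"
    and "FF d (Suc k) = (21 - gg d) + gg d * FF d k"
proof -
  have d5: "d \<le> 5" using d by auto
  let ?V1 = "spiro_V k" and ?E1 = "spiro_E d k" and ?h = "hexagon d k"
  let ?c = "spiro_entry d k" and ?x = "spiro_entry d (Suc k)"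
  have g1: "is_graph ?V1 ?E1" using graph_chain[OF d5] .
  have g2: "is_graph (set ?h) (cycle_edges ?h)" using graph_hex[OF d5] .
  have int: "?V1 \<inter> set ?h = {?c}" using V_int[OF d5] .
  have GV: "spiro_V (Suc k) = ?V1 \<union> set ?h" using V_suc[OF d5] .
  have GE: "spiro_E d (Suc k) = ?E1 \<union> cycle_edges ?h" using E_suc .
  have hd: "distinct ?h" using hex_distinct[OF d5] .
  have h0: "?h ! 0 = ?c" by (simp add: hexagon_def)
  have hx: "?h ! d = ?x" using d by (auto simp: hexagon_def)
  have dl: "d < 6" using d by auto
  have HX: "card {T \<in> subtrees (set ?h) (cycle_edges ?h). P (?c \<in> fst T) (?x \<in> fst T)} = hcount P d" for P
    using hex_transfer[OF hd hex_len dl, of P] unfolding h0 hx .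
  have H1: "card {T \<in> subtrees (set ?h) (cycle_edges ?h). ?c \<in> fst T} = 21"
    using HX[of "\<lambda>a b. a"] d hc_vals by auto
  have H2: "card {T \<in> subtrees (set ?h) (cycle_edges ?h). ?c \<notin> fst T \<and> True} = 15"
    using HX[of "\<lambda>a b. \<not> a"] d hc_vals by auto
  have H3: "card {T \<in> subtrees (set ?h) (cycle_edges ?h). ?c \<in> fst T \<and> ?x \<in> fst T} = gg d"
    using HX[of "\<lambda>a b. a \<and> b"] d hc_vals by (auto simp: gg_def)
  have H4: "card {T \<in> subtrees (set ?h) (cycle_edges ?h). ?c \<notin> fst T \<and> ?x \<in> fst T} = 21 - gg d"
    using HX[of "\<lambda>a b. \<not> a \<and> b"] d hc_vals by (auto simp: gg_def)
  let ?C1 = "{T \<in> subtrees ?V1 ?E1. ?c \<in> fst T}" and ?C2 = "{T \<in> subtrees (set ?h) (cycle_edges ?h). ?c \<in> fst T}"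
  have cC1: "card ?C1 = FF d k" unfolding FF_def ..
  have fin1: "finite (subtrees ?V1 ?E1)" using finite_subtrees[OF g1] .
  have P1: "card {T \<in> subtrees ?V1 ?E1. ?c \<notin> fst T \<and> True} + FF d k = AA d k"
    using card_part[OF fin1, of "\<lambda>T. ?c \<in> fst T"] unfolding AA_def FF_def by simp
  have GC: "card {T \<in> subtrees (spiro_V (Suc k)) (spiro_E d (Suc k)). Q T} =
    card {T \<in> subtrees ?V1 ?E1. ?c \<notin> fst T \<and> Q T} + card {T \<in> subtrees (set ?h) (cycle_edges ?h). ?c \<notin> fst T \<and> Q T} +
    card {p \<in> ?C1 \<times> ?C2. Q (joinT (fst p) (snd p))}" for Q
    unfolding GV GE by (rule glue_card[OF g1 g2 int])
  show "AA d (Suc k) + FF d k = AA d k + 15 + 21 * FF d k"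
  proof -
    have "AA d (Suc k) = card {T \<in> subtrees (spiro_V (Suc k)) (spiro_E d (Suc k)). True}" unfolding AA_def by simp
    also have "\<dots> = card {T \<in> subtrees ?V1 ?E1. ?c \<notin> fst T \<and> True} + 15 + card (?C1 \<times> ?C2)"
      using GC[of "\<lambda>T. True"] H2 by simp
    also have "card (?C1 \<times> ?C2) = FF d k * 21" using cC1 H1 by (simp add: card_cartesian_product)
    finally show ?thesis using P1 by simp
  qed
  show "FF d (Suc k) = (21 - gg d) + gg d * FF d k"
  proof -
    have xn: "?x \<notin> ?V1" using d by (auto simp: spiro_V_def)
    have e1: "{T \<in> subtrees ?V1 ?E1. ?c \<notin> fst T \<and> ?x \<in> fst T} = {}"
    proof -
      have "fst T \<subseteq> ?V1" if "T \<in> subtrees ?V1 ?E1" for T using that by (cases T) (simp add: subtrees_def)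
      then show ?thesis using xn by blast
    qed
    have e3: "{p \<in> ?C1 \<times> ?C2. ?x \<in> fst (joinT (fst p) (snd p))} = ?C1 \<times> {T \<in> subtrees (set ?h) (cycle_edges ?h). ?c \<in> fst T \<and> ?x \<in> fst T}"
    proof (rule set_eqI)
      have nx: "?x \<notin> fst T" if "T \<in> subtrees ?V1 ?E1" for T
      proof -
        have "fst T \<subseteq> ?V1" using that by (cases T) (simp add: subtrees_def)
        then show ?thesis using xn by blast
      qed
      fix p :: "(nat set \<times> nat set set) \<times> (nat set \<times> nat set set)"
      show "p \<in> {p \<in> ?C1 \<times> ?C2. ?x \<in> fst (joinT (fst p) (snd p))} \<longleftrightarrow>
            p \<in> ?C1 \<times> {T \<in> subtrees (set ?h) (cycle_edges ?h). ?c \<in> fst T \<and> ?x \<in> fst T}"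
      proof (cases "fst p \<in> ?C1")
        case True
        then have "?x \<notin> fst (fst p)" using nx by blast
        then show ?thesis using True unfolding joinT_def by (simp add: mem_Times_iff)
      next
        case False then show ?thesis by (auto simp: mem_Times_iff)
      qed
    qed
    have "FF d (Suc k) = card {T \<in> subtrees (spiro_V (Suc k)) (spiro_E d (Suc k)). ?x \<in> fst T}"
      unfolding FF_def ..
    also have "\<dots> = 0 + (21 - gg d) + card ?C1 * gg d"
      unfolding GC[of "\<lambda>T. ?x \<in> fst T"] e1 e3 H4 card_cartesian_product H3 by simp
    finally show ?thesis using cC1 by simp
  qed
qed

lemma closed1: "real (FF 1 (Suc m)) = (64 * 16 ^ m - 1) / 3 \<and>
   real (AA 1 (Suc m)) = 256 * (16 ^ m - 1) / 9 + 25 * real m / 3 + 36"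
proof (induction m)
  case 0
  have "FF 1 1 = 5 + 16 * FF 1 0" using recs(2)[of 1 0] by (simp add: gg_def)
  moreover have "AA 1 1 + FF 1 0 = AA 1 0 + 15 + 21 * FF 1 0" using recs(1)[of 1 0] by simp
  ultimately show ?case using base0[of 1] by simp
next
  case (Suc m)
  have f: "FF 1 (Suc (Suc m)) = 5 + 16 * FF 1 (Suc m)" using recs(2)[of 1 "Suc m"] by (simp add: gg_def)
  have a: "AA 1 (Suc (Suc m)) + FF 1 (Suc m) = AA 1 (Suc m) + 15 + 21 * FF 1 (Suc m)" using recs(1)[of 1 "Suc m"] by simp
  have f': "real (FF 1 (Suc (Suc m))) = 5 + 16 * real (FF 1 (Suc m))" using f by simp
  have a': "real (AA 1 (Suc (Suc m))) = real (AA 1 (Suc m)) + 15 + 20 * real (FF 1 (Suc m))"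
    using arg_cong[OF a, of real] by simp
  show ?case using Suc f' a' by (simp add: field_simps)
qed

lemma closed2: "real (FF 2 (Suc m)) = (65 * 13 ^ m - 2) / 3 \<and>
   real (AA 2 (Suc m)) = 325 * (13 ^ m - 1) / 9 + 5 * real m / 3 + 36"
proof (induction m)
  case 0
  have "FF 2 1 = 8 + 13 * FF 2 0" using recs(2)[of 2 0] by (simp add: gg_def)
  moreover have "AA 2 1 + FF 2 0 = AA 2 0 + 15 + 21 * FF 2 0" using recs(1)[of 2 0] by simp
  ultimately show ?case using base0[of 2] by simp
next
  case (Suc m)
  have f: "FF 2 (Suc (Suc m)) = 8 + 13 * FF 2 (Suc m)" using recs(2)[of 2 "Suc m"] by (simp add: gg_def)
  have a: "AA 2 (Suc (Suc m)) + FF 2 (Suc m) = AA 2 (Suc m) + 15 + 21 * FF 2 (Suc m)" using recs(1)[of 2 "Suc m"] by simp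
  have f': "real (FF 2 (Suc (Suc m))) = 8 + 13 * real (FF 2 (Suc m))" using f by simp
  have a': "real (AA 2 (Suc (Suc m))) = real (AA 2 (Suc m)) + 15 + 20 * real (FF 2 (Suc m))"
    using arg_cong[OF a, of real] by simp
  show ?case using Suc f' a' by (simp add: field_simps)
qed

lemma closed3: "real (FF 3 (Suc m)) = (240 * 12 ^ m - 9) / 11 \<and>
   real (AA 3 (Suc m)) = 4800 * (12 ^ m - 1) / 121 - 15 * real m / 11 + 36"
proof (induction m)
  case 0
  have "FF 3 1 = 9 + 12 * FF 3 0" using recs(2)[of 3 0] by (simp add: gg_def)
  moreover have "AA 3 1 + FF 3 0 = AA 3 0 + 15 + 21 * FF 3 0" using recs(1)[of 3 0] by simp
  ultimately show ?case using base0[of 3] by simp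
next
  case (Suc m)
  have f: "FF 3 (Suc (Suc m)) = 9 + 12 * FF 3 (Suc m)" using recs(2)[of 3 "Suc m"] by (simp add: gg_def)
  have a: "AA 3 (Suc (Suc m)) + FF 3 (Suc m) = AA 3 (Suc m) + 15 + 21 * FF 3 (Suc m)" using recs(1)[of 3 "Suc m"] by simp
  have f': "real (FF 3 (Suc (Suc m))) = 9 + 12 * real (FF 3 (Suc m))" using f by simp
  have a': "real (AA 3 (Suc (Suc m))) = real (AA 3 (Suc m)) + 15 + 20 * real (FF 3 (Suc m))"
    using arg_cong[OF a, of real] by simp
  show ?case using Suc f' a' by (simp add: field_simps)
qed

theorem corollary3:
  fixes n :: nat
  assumes "n \<ge> 1"
  shows "real (STN (spiro_V n) (spiro_E 1 n))
           = 256 * (16 ^ (n - 1) - 1) / 9 + 25 * real (n - 1) / 3 + 36 \<and>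
         real (STN (spiro_V n) (spiro_E 2 n))
           = 325 * (13 ^ (n - 1) - 1) / 9 + 5 * real (n - 1) / 3 + 36 \<and>
         real (STN (spiro_V n) (spiro_E 3 n))
           = 4800 * (12 ^ (n - 1) - 1) / 121 - 15 * real (n - 1) / 11 + 36"
proof -
  obtain m where m: "n = Suc m" using assms by (cases n) auto
  have s: "STN (spiro_V n) (spiro_E d n) = AA d (Suc m)" for d unfolding STN_def AA_def m ..
  show ?thesis unfolding s using closed1[of m] closed2[of m] closed3[of m] m by simp
qed

end
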